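(* Let $D=(V,A)$ be a digraph with minimum dicut size $\tau$ and let $k\ge 2$ be rational. If the underlying undirected graph $G$ of $D$ admits a nowhere-zero circular $k$-flow, then the digraph $\vec G=(V,A\cup A^{-1})$ with weight $w^D$ can pack two $\lfloor\tau/k\rfloor$-SCD's; i.e., there exist integral vectors $x^1,x^2\in\mathbb{Z}_{\ge0}^{A\cup A^{-1}}$ with $x^1+x^2\le w^D$ (in fact one may take $x^1+x^2=w^D$) such that $x^i(\delta^+_{\vec G}(U))\ge\lfloor\tau/k\rfloor$ for $i=1,2$ and all $\emptyset\neq U\subsetneq V$.
   Context: Digraphs/graphs are finite and loopless; parallel arcs/edges allowed. For $\emptyset\neq U\subsetneq V$, $\delta^+(U)$ / $\delta^-(U)$ denote arcs leaving/entering $U$. A dicut of $D$ is $\delta^+_D(U)$ with $\emptyset\neq U\subsetneq V$ and $\delta^-_D(U)=\emptyset$; "$D$ has minimum dicut size $\tau$" means $D$ has at least one dicut and the minimum number of arcs in a dicut is $\tau$. The underlying undirected graph replaces each arc $(u,v)$ by an edge $\{u,v\}$. $A^{-1}$ denotes the set of reverses $a^{-1}$ of arcs $a\in A$; $\vec G$ has vertex set $V$ and arc set $A\cup A^{-1}$, with weight $w^D_a=\tau$ for $a\in A$ and $w^D_{a^{-1}}=1$. For a positive integer $t$, a $t$-SCD ($t$-strongly-connected digraph) of $\vec G$ is a vector $x\in\mathbb{Z}_{\ge0}^{A\cup A^{-1}}$ with $x(\delta^+_{\vec G}(U))\ge t$ for all $\emptyset\neq U\subsetneq V$, where $x(B)=\sum_{e\in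 B}x_e$. For rational $k\ge2$, a nowhere-zero circular $k$-flow of an undirected graph $G$ is a pair $(E^+,f)$ with $E^+$ an orientation of $G$ and $f:E^+\to[1,k-1]$ real-valued satisfying flow conservation at every vertex. *)

theory Defs
  imports Complex_Main
begin

text \<open>A digraph is given by a finite vertex set V, a finite arc set A (arcs are
abstract objects, so parallel arcs are allowed) and tail/head maps tail, head.\<close>

definition digraph :: "'a set \<Rightarrow> 'b set \<Rightarrow> ('b \<Rightarrow> 'a) \<Rightarrow> ('b \<Rightarrow> 'a) \<Rightarrow> bool" where
  "digraph V A tail head \<longleftrightarrow> finite V \<and> finite A \<and>
     (\<forall>a\<in>A. tail a \<in> V \<and> head a \<in> V \<and> tail a \<noteq> head a)"

definition out_arcs :: "'b set \<Rightarrow> ('b \<Rightarrow> 'a) \<Rightarrow> ('b \<Rightarrow> 'a) \<Rightarrow> 'a set \<Rightarrow> 'b set" where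
  "out_arcs A tail head U = {a \<in> A. tail a \<in> U \<and> head a \<notin> U}"

definition in_arcs :: "'b set \<Rightarrow> ('b \<Rightarrow> 'a) \<Rightarrow> ('b \<Rightarrow> 'a) \<Rightarrow> 'a set \<Rightarrow> 'b set" where
  "in_arcs A tail head U = {a \<in> A. head a \<in> U \<and> tail a \<notin> U}"

definition dicut_shore :: "'a set \<Rightarrow> 'b set \<Rightarrow> ('b \<Rightarrow> 'a) \<Rightarrow> ('b \<Rightarrow> 'a) \<Rightarrow> 'a set \<Rightarrow> bool" where
  "dicut_shore V A tail head U \<longleftrightarrow> U \<noteq> {} \<and> U \<subset> V \<and> in_arcs A tail head U = {}"

definition min_dicut_size :: "'a set \<Rightarrow> 'b set \<Rightarrow> ('b \<Rightarrow> 'a) \<Rightarrow> ('b \<Rightarrow> 'a) \<Rightarrow> nat \<Rightarrow> bool" where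
  "min_dicut_size V A tail head \<tau> \<longleftrightarrow>
     (\<exists>U. dicut_shore V A tail head U \<and> card (out_arcs A tail head U) = \<tau>) \<and>
     (\<forall>U. dicut_shore V A tail head U \<longrightarrow> \<tau> \<le> card (out_arcs A tail head U))"

text \<open>Nowhere-zero circular k-flow of the underlying undirected graph: each edge
(= arc a) gets an orientation (forward a: same direction as a, otherwise reversed)
and a real value f a in [1, k-1]; flow conservation holds at every vertex.\<close>
definition ori_tail :: "('b \<Rightarrow> bool) \<Rightarrow> ('b \<Rightarrow> 'a) \<Rightarrow> ('b \<Rightarrow> 'a) \<Rightarrow> 'b \<Rightarrow> 'a" where
  "ori_tail forward tail head a = (if forward a then tail a else head a)"

definition ori_head :: "('b \<Rightarrow> bool) \<Rightarrow> ('b \<Rightarrow> 'a) \<Rightarrow> ('b \<Rightarrow> 'a) \<Rightarrow> 'b \<Rightarrow> 'a" where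
  "ori_head forward tail head a = (if forward a then head a else tail a)"

definition nz_circular_flow ::
  "'a set \<Rightarrow> 'b set \<Rightarrow> ('b \<Rightarrow> 'a) \<Rightarrow> ('b \<Rightarrow> 'a) \<Rightarrow> real \<Rightarrow> ('b \<Rightarrow> bool) \<Rightarrow> ('b \<Rightarrow> real) \<Rightarrow> bool" where
  "nz_circular_flow V A tail head k forward f \<longleftrightarrow>
     (\<forall>a\<in>A. 1 \<le> f a \<and> f a \<le> k - 1) \<and>
     (\<forall>v\<in>V. (\<Sum>a\<in>{a\<in>A. ori_tail forward tail head a = v}. f a)
           = (\<Sum>a\<in>{a\<in>A. ori_head forward tail head a = v}. f a))"

definition has_nz_circular_flow :: "'a set \<Rightarrow> 'b set \<Rightarrow> ('b \<Rightarrow> 'a) \<Rightarrow> ('b \<Rightarrow> 'a) \<Rightarrow> real \<Rightarrow> bool" where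
  "has_nz_circular_flow V A tail head k \<longleftrightarrow> (\<exists>forward f. nz_circular_flow V A tail head k forward f)"

text \<open>The digraph vec G: arc set A \<union> A^{-1}, encoded as Inl ` A \<union> Inr ` A, where
Inr a is the reverse a^{-1} of a.\<close>
definition bi_arcs :: "'b set \<Rightarrow> ('b + 'b) set" where
  "bi_arcs A = Inl ` A \<union> Inr ` A"

fun bi_tail :: "('b \<Rightarrow> 'a) \<Rightarrow> ('b \<Rightarrow> 'a) \<Rightarrow> 'b + 'b \<Rightarrow> 'a" where
  "bi_tail tail head (Inl a) = tail a"
| "bi_tail tail head (Inr a) = head a"

fun bi_head :: "('b \<Rightarrow> 'a) \<Rightarrow> ('b \<Rightarrow> 'a) \<Rightarrow> 'b + 'b \<Rightarrow> 'a" where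
  "bi_head tail head (Inl a) = head a"
| "bi_head tail head (Inr a) = tail a"

fun wD :: "nat \<Rightarrow> 'b + 'b \<Rightarrow> nat" where
  "wD \<tau> (Inl a) = \<tau>"
| "wD \<tau> (Inr a) = 1"

definition bi_out :: "'b set \<Rightarrow> ('b \<Rightarrow> 'a) \<Rightarrow> ('b \<Rightarrow> 'a) \<Rightarrow> 'a set \<Rightarrow> ('b + 'b) set" where
  "bi_out A tail head U = {e \<in> bi_arcs A. bi_tail tail head e \<in> U \<and> bi_head tail head e \<notin> U}"

definition is_SCD :: "'a set \<Rightarrow> 'b set \<Rightarrow> ('b \<Rightarrow> 'a) \<Rightarrow> ('b \<Rightarrow> 'a) \<Rightarrow> nat \<Rightarrow> ('b + 'b \<Rightarrow> nat) \<Rightarrow> bool" where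
  "is_SCD V A tail head t x \<longleftrightarrow>
     (\<forall>U. U \<noteq> {} \<and> U \<subset> V \<longrightarrow> t \<le> (\<Sum>e\<in>bi_out A tail head U. x e))"

end

theory Submission
  imports Defs
begin

lemma flow_sum_cut:
  assumes fin: "finite A" "finite U"
  and cons: "\<forall>v\<in>U. (\<Sum>a\<in>{a\<in>A. ot a = v}. f a) = (\<Sum>a\<in>{a\<in>A. oh a = v}. (f a :: real))"
  shows "(\<Sum>a\<in>{a\<in>A. ot a \<in> U}. f a) = (\<Sum>a\<in>{a\<in>A. oh a \<in> U}. f a)"
proof -
  have e1: "\<And>v. v\<in>U \<Longrightarrow> {x. x \<in> {a\<in>A. ot a \<in> U} \<and> ot x = v} = {a\<in>A. ot a = v}" by auto
  have e2: "\<And>v. v\<in>U \<Longrightarrow> {x. x \<in> {a\<in>A. oh a \<in> U} \<and> oh x = v} = {a\<in>A. oh a = v}" by auto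
  have "(\<Sum>a\<in>{a\<in>A. ot a \<in> U}. f a) = (\<Sum>v\<in>U. \<Sum>a\<in>{x. x \<in> {a\<in>A. ot a \<in> U} \<and> ot x = v}. f a)"
    using sum.group[of "{a\<in>A. ot a \<in> U}" U ot f] fin by (simp add: image_subset_iff)
  also have "\<dots> = (\<Sum>v\<in>U. \<Sum>a\<in>{a\<in>A. ot a = v}. f a)"
    by (rule sum.cong[OF refl], rule sum.cong) auto
  also have "\<dots> = (\<Sum>v\<in>U. \<Sum>a\<in>{a\<in>A. oh a = v}. f a)"
    by (rule sum.cong[OF refl]) (use cons in auto)
  also have "\<dots> = (\<Sum>v\<in>U. \<Sum>a\<in>{x. x \<in> {a\<in>A. oh a \<in> U} \<and> oh x = v}. f a)"
    by (rule sum.cong[OF refl], rule sum.cong) auto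
  also have "\<dots> = (\<Sum>a\<in>{a\<in>A. oh a \<in> U}. f a)"
    using sum.group[of "{a\<in>A. oh a \<in> U}" U oh f] fin by (simp add: image_subset_iff)
  finally show ?thesis .
qed

lemma cut_count:
  assumes finD: "finite D" and bnd: "\<forall>a\<in>D. 1 \<le> f a \<and> f a \<le> k - 1"
  and eq: "(\<Sum>a\<in>{a\<in>D. P a}. f a) = (\<Sum>a\<in>{a\<in>D. \<not> P a}. (f a :: real))"
  shows "real (card D) \<le> k * card {a\<in>D. P a}"
proof -
  have "real (card {a\<in>D. \<not> P a}) = (\<Sum>a\<in>{a\<in>D. \<not> P a}. (1::real))" by simp
  also have "\<dots> \<le> (\<Sum>a\<in>{a\<in>D. \<not> P a}. f a)" by (rule sum_mono) (use bnd in auto)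
  also have "\<dots> = (\<Sum>a\<in>{a\<in>D. P a}. f a)" using eq by simp
  also have "\<dots> \<le> (\<Sum>a\<in>{a\<in>D. P a}. k - 1)" by (rule sum_mono) (use bnd in auto)
  also have "\<dots> = (k - 1) * card {a\<in>D. P a}" by simp
  finally have h: "real (card {a\<in>D. \<not> P a}) \<le> (k - 1) * card {a\<in>D. P a}" .
  have "D = {a\<in>D. P a} \<union> {a\<in>D. \<not> P a}" by auto
  hence "card D = card {a\<in>D. P a} + card {a\<in>D. \<not> P a}"
    using finD by (metis (no_types, lifting) card_Un_disjoint disjoint_iff finite_Un mem_Collect_eq)
  thus ?thesis using h by (simp add: algebra_simps)
qed

lemma scd_generic:
  fixes A :: "'b set" and P :: "'b \<Rightarrow> bool"
  assumes finA: "finite A"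
  and H: "\<And>U. U \<noteq> {} \<Longrightarrow> U \<subset> V \<Longrightarrow> \<forall>a\<in>A. tail a \<in> U \<longrightarrow> head a \<in> U \<Longrightarrow>
            t \<le> card {a\<in>A. head a \<in> U \<and> tail a \<notin> U \<and> P a}"
  shows "is_SCD V A tail head t (\<lambda>e::'b+'b. case e of Inl a \<Rightarrow> t | Inr a \<Rightarrow> if P a then 1 else 0)"
  unfolding is_SCD_def
proof (intro allI impI)
  fix U assume U: "U \<noteq> {} \<and> U \<subset> V"
  define x :: "'b + 'b \<Rightarrow> nat" where "x = (\<lambda>e. case e of Inl a \<Rightarrow> t | Inr a \<Rightarrow> if P a then 1 else (0::nat))"
  have finB: "finite (bi_out A tail head U)"
    unfolding bi_out_def bi_arcs_def using finA by auto
  have "t \<le> (\<Sum>e\<in>bi_out A tail head U. x e)"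
  proof (cases "\<exists>a\<in>A. tail a \<in> U \<and> head a \<notin> U")
    case True
    then obtain a where a: "a \<in> A" "tail a \<in> U" "head a \<notin> U" by blast
    have "Inl a \<in> bi_out A tail head U" using a unfolding bi_out_def bi_arcs_def by auto
    hence "x (Inl a) \<le> (\<Sum>e\<in>bi_out A tail head U. x e)"
      using finB by (intro member_le_sum) auto
    thus ?thesis by (simp add: x_def)
  next
    case False
    let ?S = "{a\<in>A. head a \<in> U \<and> tail a \<notin> U \<and> P a}"
    have "t \<le> card ?S" using H U False by blast
    also have "card ?S = (\<Sum>a\<in>?S. x (Inr a))" by (simp add: x_def)
    also have "\<dots> = (\<Sum>e\<in>Inr ` ?S. x e)"
      by (subst sum.reindex) (auto simp: inj_on_def)
    also have "\<dots> \<le> (\<Sum>e\<in>bi_out A tail head U. x e)"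
      by (rule sum_mono2[OF finB]) (auto simp: bi_out_def bi_arcs_def)
    finally show ?thesis .
  qed
  thus "t \<le> (\<Sum>e\<in>bi_out A tail head U. (case e of Inl a \<Rightarrow> t | Inr a \<Rightarrow> if P a then 1 else 0))"
    by (simp add: x_def)
qed

theorem theorem4:
  fixes V :: "'a set" and A :: "'b set" and tail head :: "'b \<Rightarrow> 'a"
    and \<tau> :: nat and k :: real
  assumes "digraph V A tail head"
    and "min_dicut_size V A tail head \<tau>"
    and "k \<in> \<rat>" and "k \<ge> 2"
    and "has_nz_circular_flow V A tail head k"
  shows "\<exists>x1 x2 :: 'b + 'b \<Rightarrow> nat.
           (\<forall>e\<in>bi_arcs A. x1 e + x2 e \<le> wD \<tau> e) \<and>
           is_SCD V A tail head (nat \<lfloor>real \<tau> / k\<rfloor>) x1 \<and>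
           is_SCD V A tail head (nat \<lfloor>real \<tau> / k\<rfloor>) x2"
proof -
  obtain fw f where fl: "nz_circular_flow V A tail head k fw f"
    using assms(5) unfolding has_nz_circular_flow_def by blast
  have finV: "finite V" and finA: "finite A" and arcs: "\<forall>a\<in>A. tail a \<in> V \<and> head a \<in> V"
    using assms(1) unfolding digraph_def by auto
  define t where "t = nat \<lfloor>real \<tau> / k\<rfloor>"
  have kpos: "k > 0" using assms(4) by simp
  have tle: "real t \<le> real \<tau> / k"
    unfolding t_def using kpos by (simp add: divide_nonneg_pos)
  have "real \<tau> / k \<le> real \<tau> / 2" using assms(4) by (intro divide_left_mono) auto
  hence t2: "t + t \<le> \<tau>" using tle by linarith
  have key: "real \<tau> \<le> k * card {a\<in>A. head a \<in> U \<and> tail a \<notin> U \<and> P a}"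
    if U: "U \<noteq> {}" "U \<subset> V" and no: "\<forall>a\<in>A. tail a \<in> U \<longrightarrow> head a \<in> U"
       and P: "P = fw \<or> P = (\<lambda>a. \<not> fw a)" for U P
  proof -
    define \<Delta> where "\<Delta> = {a\<in>A. head a \<in> U \<and> tail a \<notin> U}"
    have shore: "dicut_shore V A tail head (V - U)"
      unfolding dicut_shore_def in_arcs_def using U no arcs by auto
    have "out_arcs A tail head (V - U) = \<Delta>"
      unfolding out_arcs_def \<Delta>_def using U arcs by auto
    hence tauD: "\<tau> \<le> card \<Delta>" using shore assms(2) unfolding min_dicut_size_def by metis
    have finU: "finite U" using U finV by (meson finite_subset psubset_imp_subset)
    let ?ot = "ori_tail fw tail head" and ?oh = "ori_head fw tail head"
    have cons: "(\<Sum>a\<in>{a\<in>A. ?ot a \<in> U}. f a) = (\<Sum>a\<in>{a\<in>A. ?oh a \<in> U}. f a)"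
      apply (rule flow_sum_cut[OF finA finU])
      using fl U unfolding nz_circular_flow_def by blast
    define I where "I = {a\<in>A. tail a \<in> U \<and> head a \<in> U}"
    have s1: "{a\<in>A. ?ot a \<in> U} = I \<union> {a\<in>\<Delta>. \<not> fw a}"
      unfolding I_def \<Delta>_def ori_tail_def using no by auto
    have s2: "{a\<in>A. ?oh a \<in> U} = I \<union> {a\<in>\<Delta>. fw a}"
      unfolding I_def \<Delta>_def ori_head_def using no by auto
    have finI: "finite I" unfolding I_def using finA by simp
    have finD: "finite \<Delta>" unfolding \<Delta>_def using finA by simp
    have d1: "I \<inter> {a\<in>\<Delta>. \<not> fw a} = {}" "I \<inter> {a\<in>\<Delta>. fw a} = {}"
      unfolding I_def \<Delta>_def by auto
    have "(\<Sum>a\<in>I. f a) + (\<Sum>a\<in>{a\<in>\<Delta>. \<not> fw a}. f a) = (\<Sum>a\<in>I. f a) + (\<Sum>a\<in>{a\<in>\<Delta>. fw a}. f a)"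
      using cons unfolding s1 s2
      by (simp add: sum.union_disjoint[OF finI _ d1(1)] sum.union_disjoint[OF finI _ d1(2)] finD)
    hence eq: "(\<Sum>a\<in>{a\<in>\<Delta>. fw a}. f a) = (\<Sum>a\<in>{a\<in>\<Delta>. \<not> fw a}. f a)" by simp
    have bnd: "\<forall>a\<in>\<Delta>. 1 \<le> f a \<and> f a \<le> k - 1"
      using fl unfolding nz_circular_flow_def \<Delta>_def by auto
    have "real (card \<Delta>) \<le> k * card {a\<in>\<Delta>. P a}"
      using P
    proof
      assume "P = fw" thus ?thesis using cut_count[OF finD bnd eq] by simp
    next
      have eq2: "(\<Sum>a\<in>{a\<in>\<Delta>. \<not> fw a}. f a) = (\<Sum>a\<in>{a\<in>\<Delta>. \<not> \<not> fw a}. f a)" using eq by simp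
      assume "P = (\<lambda>a. \<not> fw a)" thus ?thesis using cut_count[OF finD bnd eq2] by simp
    qed
    moreover have "{a\<in>\<Delta>. P a} = {a\<in>A. head a \<in> U \<and> tail a \<notin> U \<and> P a}" unfolding \<Delta>_def by auto
    ultimately show ?thesis using tauD by simp
  qed
  have H: "t \<le> card {a\<in>A. head a \<in> U \<and> tail a \<notin> U \<and> P a}"
    if "U \<noteq> {}" "U \<subset> V" "\<forall>a\<in>A. tail a \<in> U \<longrightarrow> head a \<in> U" "P = fw \<or> P = (\<lambda>a. \<not> fw a)" for U P
  proof -
    have "real \<tau> / k \<le> card {a\<in>A. head a \<in> U \<and> tail a \<notin> U \<and> P a}"
      using key[OF that] kpos by (simp add: divide_le_eq mult.commute)
    thus ?thesis using tle by linarith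
  qed
  have S1: "is_SCD V A tail head t (\<lambda>e. case e of Inl a \<Rightarrow> t | Inr a \<Rightarrow> if fw a then 1 else 0)"
    by (rule scd_generic[OF finA]) (rule H, auto)
  have S2: "is_SCD V A tail head t (\<lambda>e. case e of Inl a \<Rightarrow> t | Inr a \<Rightarrow> if \<not> fw a then 1 else 0)"
    by (rule scd_generic[OF finA]) (rule H, auto)
  have B: "\<forall>e\<in>bi_arcs A. (\<lambda>e. case e of Inl a \<Rightarrow> t | Inr a \<Rightarrow> if fw a then 1 else 0) e
            + (\<lambda>e. case e of Inl a \<Rightarrow> t | Inr a \<Rightarrow> if \<not> fw a then 1 else 0) e \<le> wD \<tau> e"
    using t2 by (auto simp: bi_arcs_def)
  show ?thesis using S1 S2 B unfolding t_def by blast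
qed

end
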